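(* Let $c\in\mathbb{R}^m\setminus\{0\}$ and write every $u\in\mathbb{R}^m$ as $u=(x,y)\in\mathbb{R}\times\mathbb{R}^{m-1}$ with $x=\langle u,c/\|c\|\rangle$ and $y\in c^\perp$ the orthogonal projection of $u$ onto $c^\perp$. Then the support function of $G(c)$ is $$h_{G(c)}(x,y)=\frac{\sqrt{x^2+\|y\|^2}}{\sqrt{2\pi}}\exp\left(\frac{-x^2\|c\|^2}{2(x^2+\|y\|^2)}\right)+\frac{x\|c\|}{2}\operatorname{erf}\left(\frac{x\|c\|}{\sqrt2\sqrt{x^2+\|y\|^2}}\right).$$
   Context: For a convex body $K\subset\mathbb{R}^m$ its support function is $h_K(u)=\sup\{\langle u,x\rangle : x\in K\}$. For an integrable random vector $X\in\mathbb{R}^m$, the Vitale zonoid $\mathbb{E}\underline{X}$ is the convex body with support function $h_{\mathbb{E}\underline{X}}(u)=\frac12\mathbb{E}|\langle u,X\rangle|$. For $c\in\mathbb{R}^m$, $G(c):=\mathbb{E}\underline{c+\xi}$ where $\xi\in\mathbb{R}^m$ is a standard Gaussian vector (mean $0$, identity covariance). The error function is $\operatorname{erf}(t)=\frac{2}{\sqrt\pi}\int_0^t e^{-s^2}\,ds$. *)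

theory Defs
  imports "HOL-Probability.Probability"
begin

definition erf :: "real \<Rightarrow> real" where
  "erf t = 2 / sqrt pi * (LBINT s=ereal 0..ereal t. exp (- (s\<^sup>2)))"

definition support_fun :: "'a::real_inner set \<Rightarrow> 'a \<Rightarrow> real" where
  "support_fun K u = (SUP x\<in>K. u \<bullet> x)"

definition std_gauss :: "'a::euclidean_space measure" where
  "std_gauss = density lborel
     (\<lambda>x. ennreal ((2 * pi) powr (- real DIM('a) / 2) * exp (- (norm x)\<^sup>2 / 2)))"

text \<open>The Vitale zonoid of a random vector X on a probability space M:
  the (unique) closed convex set whose support function is
  u \<mapsto> 1/2 E|<u,X>|, i.e. the intersection of the half-spaces
  {z. u\<bullet>z \<le> 1/2 E|<u,X>|}.\<close>
definition vitale_zonoid :: "'b measure \<Rightarrow> ('b \<Rightarrow> 'a::euclidean_space) \<Rightarrow> 'a set" where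
  "vitale_zonoid M X = {z. \<forall>u. u \<bullet> z \<le> (1/2) * (\<integral>\<omega>. \<bar>u \<bullet> X \<omega>\<bar> \<partial>M)}"

definition G :: "'a::euclidean_space \<Rightarrow> 'a set" where
  "G c = vitale_zonoid (std_gauss :: 'a measure) (\<lambda>\<xi>. c + \<xi>)"

end

theory Submission
  imports Defs
begin

lemma erf_deriv: "(erf has_real_derivative (2 / sqrt pi * exp (- (x\<^sup>2)))) (at x)"
proof -
  define a where "a = min 0 x - 1"
  define b where "b = max 0 x + 1"
  have "((\<lambda>u. LBINT y=ereal 0..ereal u. exp (- (y\<^sup>2))) has_vector_derivative (exp (- (x\<^sup>2)))) (at x within {a..b})"
    by (rule interval_integral_FTC2) (auto simp: a_def b_def intro!: continuous_intros)
  also have "at x within {a..b} = at x"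
    by (rule at_within_Icc_at) (auto simp: a_def b_def)
  finally have "((\<lambda>u. LBINT y=ereal 0..ereal u. exp (- (y\<^sup>2))) has_real_derivative (exp (- (x\<^sup>2)))) (at x)"
    by (simp add: has_real_derivative_iff_has_vector_derivative)
  from DERIV_cmult[OF this, of "2 / sqrt pi"] show ?thesis
    by (simp add: erf_def[abs_def])
qed

lemma erf_odd: "erf (- t) = - erf t"
proof -
  have "(LBINT s=ereal 0..ereal (-t). exp (- (s\<^sup>2))) = (LBINT s=ereal t..ereal 0. exp (- ((-s)\<^sup>2)))"
    by (subst interval_integral_reflect) simp
  also have "\<dots> = - (LBINT s=ereal 0..ereal t. exp (- (s\<^sup>2)))"
    by (subst interval_integral_endpoints_reverse) simp
  finally show ?thesis by (simp add: erf_def)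
qed

lemma erf_at_top: "(erf \<longlongrightarrow> 1) at_top"
proof -
  have int: "set_integrable lborel {0..} (\<lambda>x::real. exp (- x\<^sup>2))"
    using gaussian_moment_0 unfolding set_integrable_def by (simp add: has_bochner_integral_iff)
  have val: "set_lebesgue_integral lborel {0..} (\<lambda>x::real. exp (- x\<^sup>2)) = sqrt pi / 2"
    using gaussian_moment_0 unfolding set_lebesgue_integral_def by (simp add: has_bochner_integral_iff)
  have "((\<lambda>b. set_lebesgue_integral lborel {0..b} (\<lambda>x::real. exp (- x\<^sup>2))) \<longlongrightarrow> sqrt pi / 2) at_top"
    using tendsto_set_lebesgue_integral_at_top[OF _ int] val by simp
  then have "((\<lambda>b. 2 / sqrt pi * set_lebesgue_integral lborel {0..b} (\<lambda>x::real. exp (- x\<^sup>2))) \<longlongrightarrow> 2 / sqrt pi * (sqrt pi / 2)) at_top"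
    by (intro tendsto_mult tendsto_const)
  then have lim: "((\<lambda>b. 2 / sqrt pi * set_lebesgue_integral lborel {0..b} (\<lambda>x::real. exp (- x\<^sup>2))) \<longlongrightarrow> 1) at_top"
    by simp
  show ?thesis
  proof (rule Lim_transform_eventually[OF lim])
    show "\<forall>\<^sub>F b in at_top. 2 / sqrt pi * set_lebesgue_integral lborel {0..b} (\<lambda>x::real. exp (- x\<^sup>2)) = erf b"
      using eventually_ge_at_top[of "0::real"]
      by eventually_elim (simp add: erf_def interval_integral_Icc)
  qed
qed

lemma erf_at_bot: "(erf \<longlongrightarrow> -1) at_bot"
proof -
  have "((\<lambda>t. - erf (- t)) \<longlongrightarrow> -1) at_bot"
    by (intro tendsto_minus filterlim_compose[OF erf_at_top] filterlim_uminus_at_top_at_bot)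
  then show ?thesis by (simp add: erf_odd)
qed


lemma nd_eq: "s > 0 \<Longrightarrow> normal_density 0 s t = exp (- t\<^sup>2 / (2 * s\<^sup>2)) / (sqrt 2 * sqrt pi * s)"
  by (simp add: normal_density_def real_sqrt_mult)

lemma lin_top: "(c::real) > 0 \<Longrightarrow> filterlim (\<lambda>t. t / c) at_top at_top"
  using filterlim_at_top_mult_tendsto_pos[OF tendsto_const[of "1/c"] _ filterlim_ident]
  by simp

lemma lin_bot: "(c::real) > 0 \<Longrightarrow> filterlim (\<lambda>t. t / c) at_bot at_bot"
  unfolding filterlim_at_bot_mirror filterlim_uminus_at_bot
  using lin_top by simp

lemma nd_tendsto_top: "s > 0 \<Longrightarrow> (normal_density 0 s \<longlongrightarrow> 0) at_top"
proof -
  assume s: "s > 0"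
  have "filterlim (\<lambda>t::real. t * t) at_top at_top"
    by (rule filterlim_at_top_mult_at_top[OF filterlim_ident filterlim_ident])
  then have "filterlim (\<lambda>t::real. t * t / (2 * s\<^sup>2)) at_top at_top"
    using s by (intro filterlim_compose[OF lin_top]) auto
  then have "filterlim (\<lambda>t::real. - (t * t / (2 * s\<^sup>2))) at_bot at_top"
    by (simp add: filterlim_uminus_at_bot)
  then have "((\<lambda>t::real. exp (- (t * t / (2 * s\<^sup>2)))) \<longlongrightarrow> 0) at_top"
    by (rule exp_at_bot[THEN filterlim_compose])
  then have "((\<lambda>t::real. exp (- (t * t / (2 * s\<^sup>2))) / (sqrt 2 * sqrt pi * s)) \<longlongrightarrow> 0 / (sqrt 2 * sqrt pi * s)) at_top"
    by (rule tendsto_divide[OF _ tendsto_const]) (use s in simp)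
  moreover have "normal_density 0 s = (\<lambda>t::real. exp (- (t * t / (2 * s\<^sup>2))) / (sqrt 2 * sqrt pi * s))"
    using s by (simp add: fun_eq_iff nd_eq power2_eq_square)
  ultimately show ?thesis by simp
qed

lemma nd_tendsto_bot: "s > 0 \<Longrightarrow> (normal_density 0 s \<longlongrightarrow> 0) at_bot"
proof -
  assume s: "s > 0"
  have e: "(\<lambda>x. normal_density 0 s (-x)) = normal_density 0 s" by (simp add: normal_density_def fun_eq_iff)
  show ?thesis unfolding filterlim_at_bot_mirror e using nd_tendsto_top[OF s] .
qed

lemma abs_gauss_integral:
  fixes s a :: real
  assumes s: "s > 0"
  shows "(\<integral>t. normal_density 0 s t * \<bar>a + t\<bar> \<partial>lborel)
      = 2 * s / sqrt (2 * pi) * exp (- a\<^sup>2 / (2 * s\<^sup>2)) + a * erf (a / (sqrt 2 * s))"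
    and "integrable lborel (\<lambda>t. normal_density 0 s t * \<bar>a + t\<bar>)"
proof -
  define nd where "nd = normal_density 0 s"
  define F where "F t = - s\<^sup>2 * nd t + a / 2 * erf (t / (sqrt 2 * s))" for t
  have nd: "nd t = exp (- t\<^sup>2 / (2 * s\<^sup>2)) / (sqrt 2 * sqrt pi * s)" for t
    using s by (simp add: nd_def nd_eq)
  have dF: "DERIV F t :> (a + t) * nd t" for t
  proof -
    have "DERIV F t :> - s\<^sup>2 * (exp (- t\<^sup>2 / (2 * s\<^sup>2)) * (- (2 * t) / (2 * s\<^sup>2)) / (sqrt 2 * sqrt pi * s))
       + a / 2 * (2 / sqrt pi * exp (- ((t / (sqrt 2 * s))\<^sup>2)) * (1 / (sqrt 2 * s)))"
    proof -
      have e: "((\<lambda>x. erf (x / (sqrt 2 * s))) has_real_derivative (2 / sqrt pi * exp (- ((t / (sqrt 2 * s))\<^sup>2)) * (1 / (sqrt 2 * s)))) (at t)"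
        using DERIV_chain2[OF erf_deriv DERIV_cdivide[OF DERIV_ident, where c="sqrt 2 * s" and x=t]] by simp
      have n: "((\<lambda>t. exp (- t\<^sup>2 / (2 * s\<^sup>2)) / (sqrt 2 * sqrt pi * s)) has_real_derivative
          (exp (- t\<^sup>2 / (2 * s\<^sup>2)) * (- (2 * t) / (2 * s\<^sup>2)) / (sqrt 2 * sqrt pi * s))) (at t)"
        using s by (auto intro!: derivative_eq_intros simp: power2_eq_square)
      show ?thesis
        unfolding F_def nd[abs_def]
        by (rule DERIV_add[OF DERIV_cmult[OF n] DERIV_cmult[OF e]])
    qed
    moreover have "- s\<^sup>2 * (exp (- t\<^sup>2 / (2 * s\<^sup>2)) * (- (2 * t) / (2 * s\<^sup>2)) / (sqrt 2 * sqrt pi * s))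
       + a / 2 * (2 / sqrt pi * exp (- ((t / (sqrt 2 * s))\<^sup>2)) * (1 / (sqrt 2 * s))) = (a + t) * nd t"
      using s by (simp add: nd power_divide field_simps)
    ultimately show ?thesis by simp
  qed
  have contF: "isCont F t" for t
    using dF by (rule DERIV_isCont)
  have cont_f: "isCont (\<lambda>t. (a + t) * nd t) t" for t
    unfolding nd[abs_def] using s by (intro continuous_intros) auto
  have ndtop: "(nd \<longlongrightarrow> 0) at_top" using nd_tendsto_top[OF s] by (simp add: nd_def)
  have ndbot: "(nd \<longlongrightarrow> 0) at_bot" using nd_tendsto_bot[OF s] by (simp add: nd_def)
  have Ftop: "(F \<longlongrightarrow> a / 2) at_top"
  proof -
    have "((\<lambda>t. - s\<^sup>2 * nd t + a / 2 * erf (t / (sqrt 2 * s))) \<longlongrightarrow> - s\<^sup>2 * 0 + a / 2 * 1) at_top"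
      using s by (intro tendsto_intros ndtop filterlim_compose[OF erf_at_top] lin_top) auto
    then show ?thesis by (simp add: F_def[abs_def])
  qed
  have Fbot: "(F \<longlongrightarrow> - a / 2) at_bot"
  proof -
    have "((\<lambda>t. - s\<^sup>2 * nd t + a / 2 * erf (t / (sqrt 2 * s))) \<longlongrightarrow> - s\<^sup>2 * 0 + a / 2 * -1) at_bot"
      using s by (intro tendsto_intros ndbot filterlim_compose[OF erf_at_bot] lin_bot) auto
    then show ?thesis by (simp add: F_def[abs_def])
  qed
  have I1: "set_integrable lborel (einterval (ereal (-a)) \<infinity>) (\<lambda>t. (a + t) * nd t)"
     "(LBINT t=ereal (-a)..\<infinity>. (a + t) * nd t) = a / 2 - F (-a)"
  proof -
    note r = interval_integral_FTC_nonneg[where a="ereal (-a)" and b=\<infinity> and F=F and f="\<lambda>t. (a + t) * nd t" and A="F (-a)" and B="a/2"]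
    have p: "AE x in lborel. ereal (- a) < ereal x \<longrightarrow> ereal x < \<infinity> \<longrightarrow> 0 \<le> (a + x) * nd x"
      by (auto simp: nd_def)
    have l1: "((F \<circ> real_of_ereal) \<longlongrightarrow> F (- a)) (at_right (ereal (- a)))"
      unfolding ereal_tendsto_simps1 using contF by (simp add: isCont_def filterlim_at_split)
    have l2: "((F \<circ> real_of_ereal) \<longlongrightarrow> a / 2) (at_left \<infinity>)"
      unfolding ereal_tendsto_simps1 by (rule Ftop)
    show "set_integrable lborel (einterval (ereal (-a)) \<infinity>) (\<lambda>t. (a + t) * nd t)"
      using r(1)[OF _ dF cont_f p l1 l2] by simp
    show "(LBINT t=ereal (-a)..\<infinity>. (a + t) * nd t) = a / 2 - F (-a)"
      using r(2)[OF _ dF cont_f p l1 l2] by simp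
  qed
  have I2: "set_integrable lborel (einterval (-\<infinity>) (ereal (-a))) (\<lambda>t. - (a + t) * nd t)"
     "(LBINT t=-\<infinity>..ereal (-a). - (a + t) * nd t) = - F (-a) - a / 2"
  proof -
    note r = interval_integral_FTC_nonneg[where b="ereal (-a)" and a="-\<infinity>" and F="\<lambda>t. - F t" and f="\<lambda>t. - (a + t) * nd t" and B="- F (-a)" and A="a/2"]
    have d: "DERIV (\<lambda>t. - F t) x :> - (a + x) * nd x" for x
      using DERIV_minus[OF dF[of x]] by (simp only: minus_mult_left)
    have c: "isCont (\<lambda>t. - (a + t) * nd t) x" for x
      unfolding nd[abs_def] using s by (intro continuous_intros) auto
    have p: "AE x in lborel. -\<infinity> < ereal x \<longrightarrow> ereal x < ereal (-a) \<longrightarrow> 0 \<le> - (a + x) * nd x"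
      by (auto simp: nd_def intro!: mult_nonneg_nonneg)
    have l1: "(((\<lambda>t. - F t) \<circ> real_of_ereal) \<longlongrightarrow> - F (- a)) (at_left (ereal (- a)))"
      unfolding ereal_tendsto_simps1 using contF by (auto simp: isCont_def filterlim_at_split intro!: tendsto_minus)
    have l2: "(((\<lambda>t. - F t) \<circ> real_of_ereal) \<longlongrightarrow> a / 2) (at_right (-\<infinity>))"
      unfolding ereal_tendsto_simps1 using tendsto_minus[OF Fbot] by simp
    show "set_integrable lborel (einterval (-\<infinity>) (ereal (-a))) (\<lambda>t. - (a + t) * nd t)"
      using r(1)[OF _ d c p l2 l1] by simp
    show "(LBINT t=-\<infinity>..ereal (-a). - (a + t) * nd t) = - F (-a) - a / 2"
      using r(2)[OF _ d c p l2 l1] by simp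
  qed
  have split: "nd t * \<bar>a + t\<bar> = indicator (einterval (ereal (-a)) \<infinity>) t * ((a + t) * nd t)
      + indicator (einterval (-\<infinity>) (ereal (-a))) t * (- (a + t) * nd t)" for t
    by (auto simp: indicator_def einterval_iff abs_if)
  have i1: "integrable lborel (\<lambda>t. indicator (einterval (ereal (-a)) \<infinity>) t * ((a + t) * nd t))"
    using I1(1) by (simp add: set_integrable_def)
  have i2: "integrable lborel (\<lambda>t. indicator (einterval (-\<infinity>) (ereal (-a))) t * (- (a + t) * nd t))"
    using I2(1) by (simp add: set_integrable_def)
  show "integrable lborel (\<lambda>t. normal_density 0 s t * \<bar>a + t\<bar>)"
    unfolding nd_def[symmetric] split using i1 i2 by simp
  have "(\<integral>t. normal_density 0 s t * \<bar>a + t\<bar> \<partial>lborel)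
      = (LBINT t=ereal (-a)..\<infinity>. (a + t) * nd t) + (LBINT t=-\<infinity>..ereal (-a). - (a + t) * nd t)"
    unfolding nd_def[symmetric] split using i1 i2
    by (simp add: interval_lebesgue_integral_def set_lebesgue_integral_def)
  also have "\<dots> = - 2 * F (-a)" using I1(2) I2(2) by simp
  also have "\<dots> = 2 * s / sqrt (2 * pi) * exp (- a\<^sup>2 / (2 * s\<^sup>2)) + a * erf (a / (sqrt 2 * s))"
    using s by (simp add: F_def nd erf_odd real_sqrt_mult field_simps power2_eq_square)
  finally show "(\<integral>t. normal_density 0 s t * \<bar>a + t\<bar> \<partial>lborel)
      = 2 * s / sqrt (2 * pi) * exp (- a\<^sup>2 / (2 * s\<^sup>2)) + a * erf (a / (sqrt 2 * s))" .
qed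

lemma vitale_support:
  fixes X :: "'b \<Rightarrow> 'a::euclidean_space"
  assumes int: "integrable M X"
  shows "support_fun (vitale_zonoid M X) u = 1/2 * (\<integral>\<omega>. \<bar>u \<bullet> X \<omega>\<bar> \<partial>M)"
proof -
  have [measurable]: "X \<in> borel_measurable M" using int by (rule borel_measurable_integrable)
  have intS: "integrable M (\<lambda>\<omega>. sgn (u \<bullet> X \<omega>) *\<^sub>R X \<omega>)"
  proof (rule Bochner_Integration.integrable_bound[OF integrable_norm[OF int]])
    show "(\<lambda>\<omega>. sgn (u \<bullet> X \<omega>) *\<^sub>R X \<omega>) \<in> borel_measurable M" by measurable
    show "AE \<omega> in M. norm (sgn (u \<bullet> X \<omega>) *\<^sub>R X \<omega>) \<le> norm (norm (X \<omega>))"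
      by (auto simp: sgn_if)
  qed
  define z0 where "z0 = (1/2) *\<^sub>R (\<integral>\<omega>. sgn (u \<bullet> X \<omega>) *\<^sub>R X \<omega> \<partial>M)"
  have inner_z0: "v \<bullet> z0 = 1/2 * (\<integral>\<omega>. sgn (u \<bullet> X \<omega>) * (v \<bullet> X \<omega>) \<partial>M)" for v
  proof -
    have "v \<bullet> z0 = 1/2 * (v \<bullet> (\<integral>\<omega>. sgn (u \<bullet> X \<omega>) *\<^sub>R X \<omega> \<partial>M))"
      by (simp add: z0_def)
    also have "v \<bullet> (\<integral>\<omega>. sgn (u \<bullet> X \<omega>) *\<^sub>R X \<omega> \<partial>M) = (\<integral>\<omega>. v \<bullet> (sgn (u \<bullet> X \<omega>) *\<^sub>R X \<omega>) \<partial>M)"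
      using intS by (rule integral_inner_right[symmetric])
    finally show ?thesis by simp
  qed
  have z0_in: "z0 \<in> vitale_zonoid M X"
    unfolding vitale_zonoid_def
  proof (intro CollectI allI)
    fix v :: 'a
    have "(\<integral>\<omega>. sgn (u \<bullet> X \<omega>) * (v \<bullet> X \<omega>) \<partial>M) \<le> (\<integral>\<omega>. \<bar>v \<bullet> X \<omega>\<bar> \<partial>M)"
    proof (rule integral_mono)
      show "integrable M (\<lambda>\<omega>. sgn (u \<bullet> X \<omega>) * (v \<bullet> X \<omega>))"
        using integrable_inner_right[OF intS, of v] by simp
      show "integrable M (\<lambda>\<omega>. \<bar>v \<bullet> X \<omega>\<bar>)"
        using integrable_inner_right[OF int, of v] by (rule integrable_abs)
      show "sgn (u \<bullet> X \<omega>) * (v \<bullet> X \<omega>) \<le> \<bar>v \<bullet> X \<omega>\<bar>" for \<omega>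
        by (auto simp: sgn_if)
    qed
    then show "v \<bullet> z0 \<le> 1/2 * (\<integral>\<omega>. \<bar>v \<bullet> X \<omega>\<bar> \<partial>M)"
      by (simp add: inner_z0)
  qed
  have uz0: "u \<bullet> z0 = 1/2 * (\<integral>\<omega>. \<bar>u \<bullet> X \<omega>\<bar> \<partial>M)"
  proof -
    have "(\<lambda>\<omega>. sgn (u \<bullet> X \<omega>) * (u \<bullet> X \<omega>)) = (\<lambda>\<omega>. \<bar>u \<bullet> X \<omega>\<bar>)"
      by (auto simp: sgn_if fun_eq_iff)
    then show ?thesis by (simp add: inner_z0)
  qed
  have "support_fun (vitale_zonoid M X) u = u \<bullet> z0"
    unfolding support_fun_def
  proof (rule cSup_eq_maximum)
    show "u \<bullet> z0 \<in> (\<lambda>x. u \<bullet> x) ` vitale_zonoid M X" using z0_in by blast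
    show "\<And>y. y \<in> (\<lambda>x. u \<bullet> x) ` vitale_zonoid M X \<Longrightarrow> y \<le> u \<bullet> z0"
      unfolding uz0 by (auto simp: vitale_zonoid_def)
  qed
  then show ?thesis using uz0 by simp
qed

abbreviation N1 :: "real measure" where
  "N1 \<equiv> density lborel (\<lambda>x. ennreal (std_normal_density x))"

lemma indicator_PiE_prod:
  assumes "x \<in> PiE I (\<lambda>_. UNIV)" "finite I"
  shows "(indicator (PiE I A) x :: ennreal) = (\<Prod>i\<in>I. indicator (A i) (x i))"
proof (cases "x \<in> PiE I A")
  case True then show ?thesis by (auto simp: indicator_def PiE_iff)
next
  case False
  then obtain i where "i \<in> I" "x i \<notin> A i" using assms(1) by (auto simp: PiE_iff)
  then have "(\<Prod>i\<in>I. indicator (A i) (x i) :: ennreal) = 0"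
    using assms(2) by (intro prod_zero) (auto intro!: bexI[of _ i])
  then show ?thesis using False by simp
qed

lemma PiM_N1:
  fixes I :: "'i set"
  assumes fin: "finite I"
  shows "density (PiM I (\<lambda>_. lborel)) (\<lambda>f. ennreal (\<Prod>i\<in>I. std_normal_density (f i))) = PiM I (\<lambda>_. N1)"
proof -
  have ps: "prob_space N1" by (rule prob_space_normal_density) simp
  interpret N: product_sigma_finite "\<lambda>_::'i. N1"
    by (simp add: product_sigma_finite_def prob_space_imp_sigma_finite ps)
  interpret L: product_sigma_finite "\<lambda>_::'i. lborel::real measure"
    by (simp add: product_sigma_finite_def lborel.sigma_finite_measure_axioms)
  show ?thesis
  proof (rule N.PiM_eqI[OF fin])
    show "sets (density (PiM I (\<lambda>_. lborel)) (\<lambda>f. ennreal (\<Prod>i\<in>I. std_normal_density (f i)))) = sets (PiM I (\<lambda>_. N1))"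
      by (simp only: sets_density) (rule sets_PiM_cong, auto)
    fix A assume A: "\<And>i. i \<in> I \<Longrightarrow> A i \<in> sets N1"
    then have A': "\<And>i. i \<in> I \<Longrightarrow> A i \<in> sets borel" by simp
    have PA: "PiE I A \<in> sets (PiM I (\<lambda>_. lborel))"
      using A' by (intro sets_PiM_I_finite fin) auto
    have "emeasure (density (PiM I (\<lambda>_. lborel)) (\<lambda>f. ennreal (\<Prod>i\<in>I. std_normal_density (f i)))) (PiE I A)
       = (\<integral>\<^sup>+ f. ennreal (\<Prod>i\<in>I. std_normal_density (f i)) * indicator (PiE I A) f \<partial>PiM I (\<lambda>_. lborel))"
      using PA by (subst emeasure_density) auto
    also have "\<dots> = (\<integral>\<^sup>+ f. (\<Prod>i\<in>I. ennreal (std_normal_density (f i)) * indicator (A i) (f i)) \<partial>PiM I (\<lambda>_. lborel))"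
    proof (rule nn_integral_cong)
      fix f assume "f \<in> space (PiM I (\<lambda>_. lborel::real measure))"
      then have f: "f \<in> PiE I (\<lambda>_. UNIV)" by (simp add: space_PiM)
      show "ennreal (\<Prod>i\<in>I. std_normal_density (f i)) * indicator (PiE I A) f
          = (\<Prod>i\<in>I. ennreal (std_normal_density (f i)) * indicator (A i) (f i))"
        by (simp add: indicator_PiE_prod[OF f fin] prod.distrib prod_ennreal)
    qed
    also have "\<dots> = (\<Prod>i\<in>I. \<integral>\<^sup>+ t. ennreal (std_normal_density t) * indicator (A i) t \<partial>lborel)"
      using A' by (intro L.product_nn_integral_prod fin) auto
    also have "\<dots> = (\<Prod>i\<in>I. emeasure N1 (A i))"
      using A' by (intro prod.cong refl) (simp add: emeasure_density)
    finally show "emeasure (density (PiM I (\<lambda>_. lborel)) (\<lambda>f. ennreal (\<Prod>i\<in>I. std_normal_density (f i)))) (PiE I A)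
       = (\<Prod>i\<in>I. emeasure N1 (A i))" .
  qed
qed

lemma norm_sum_Basis_sq:
  fixes f :: "'a::euclidean_space \<Rightarrow> real"
  shows "(norm (\<Sum>b\<in>Basis. f b *\<^sub>R b))\<^sup>2 = (\<Sum>b\<in>Basis. (f b)\<^sup>2)"
proof -
  have c: "(\<Sum>b\<in>Basis. f b *\<^sub>R b) \<bullet> b' = f b'" if "b' \<in> (Basis::'a set)" for b'
    using that by (simp add: inner_sum_left inner_Basis if_distrib[of "\<lambda>x. _ * x"] sum.delta cong: if_cong)
  have "(norm (\<Sum>b\<in>Basis. f b *\<^sub>R b))\<^sup>2 = (\<Sum>b\<in>Basis. f b *\<^sub>R b) \<bullet> (\<Sum>b\<in>Basis. f b *\<^sub>R b)"
    by (rule power2_norm_eq_inner)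
  also have "\<dots> = (\<Sum>b'\<in>Basis. ((\<Sum>b\<in>Basis. f b *\<^sub>R b) \<bullet> b') * ((\<Sum>b\<in>Basis. f b *\<^sub>R b) \<bullet> b'))"
    by (rule euclidean_inner)
  also have "\<dots> = (\<Sum>b\<in>Basis. (f b)\<^sup>2)"
    by (rule sum.cong) (simp_all add: c power2_eq_square)
  finally show ?thesis .
qed

lemma gauss_density_prod:
  fixes f :: "'a::euclidean_space \<Rightarrow> real"
  shows "(2 * pi) powr (- real DIM('a) / 2) * exp (- (norm (\<Sum>b\<in>Basis. f b *\<^sub>R b))\<^sup>2 / 2)
       = (\<Prod>b\<in>Basis. std_normal_density (f b))"
proof -
  have "(\<Prod>b\<in>(Basis::'a set). std_normal_density (f b)) = (\<Prod>b\<in>(Basis::'a set). (1 / sqrt (2 * pi)) * exp (- (f b)\<^sup>2 / 2))"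
    by (simp add: std_normal_density_def)
  also have "\<dots> = (1 / sqrt (2 * pi)) ^ DIM('a) * exp (\<Sum>b\<in>Basis. - (f b)\<^sup>2 / 2)"
    by (simp only: prod.distrib prod_constant exp_sum[OF finite_Basis])
  also have "(1 / sqrt (2 * pi)) ^ DIM('a) = (2 * pi) powr (- real DIM('a) / 2)"
  proof -
    have "(1 / sqrt (2 * pi)) = (2 * pi) powr (- 1 / 2)"
      by (simp add: powr_minus_divide powr_half_sqrt[symmetric])
    then have "(1 / sqrt (2 * pi)) ^ DIM('a) = ((2 * pi) powr (- 1 / 2)) ^ DIM('a)" by simp
    also have "\<dots> = (2 * pi) powr (- 1 / 2 * real DIM('a))"
      by (subst powr_power) auto
    finally show ?thesis by simp
  qed
  also have "(\<Sum>b\<in>(Basis::'a set). - (f b)\<^sup>2 / 2) = - (norm (\<Sum>b\<in>Basis. f b *\<^sub>R b))\<^sup>2 / 2"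
    by (simp add: norm_sum_Basis_sq sum_divide_distrib[symmetric] sum_negf)
  finally show ?thesis by simp
qed

abbreviation Q :: "'a::euclidean_space itself \<Rightarrow> ('a \<Rightarrow> real) measure" where
  "Q _ \<equiv> PiM (Basis::'a set) (\<lambda>_. N1)"

lemma std_gauss_distr:
  "(std_gauss :: 'a::euclidean_space measure) = distr (Q TYPE('a)) borel (\<lambda>f. \<Sum>b\<in>Basis. f b *\<^sub>R b)"
proof -
  let ?g = "\<lambda>x::'a. ennreal ((2 * pi) powr (- real DIM('a) / 2) * exp (- (norm x)\<^sup>2 / 2))"
  let ?P = "PiM (Basis::'a set) (\<lambda>_. lborel::real measure)"
  let ?phi = "\<lambda>f. \<Sum>b\<in>(Basis::'a set). f b *\<^sub>R b"
  have "(std_gauss :: 'a measure) = density (distr ?P borel ?phi) ?g"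
    unfolding std_gauss_def by (subst lborel_eq) rule
  also have "\<dots> = distr (density ?P (\<lambda>f. ?g (?phi f))) borel ?phi"
    by (rule density_distr) auto
  also have "(\<lambda>f. ?g (?phi f)) = (\<lambda>f. ennreal (\<Prod>b\<in>Basis. std_normal_density (f b)))"
    by (intro ext arg_cong[where f=ennreal] gauss_density_prod)
  also have "density ?P (\<lambda>f. ennreal (\<Prod>b\<in>Basis. std_normal_density (f b))) = Q TYPE('a)"
    by (rule PiM_N1) simp
  finally show ?thesis .
qed

lemma prob_N1: "prob_space N1" by (rule prob_space_normal_density) simp

lemma prob_Q: "prob_space (Q TYPE('a::euclidean_space))"
  by (rule prob_space_PiM) (rule prob_N1)

lemma Q_comp_distr:
  assumes "b \<in> (Basis::'a::euclidean_space set)"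
  shows "distr (Q TYPE('a)) lborel (\<lambda>f. f b) = N1"
proof -
  have "distr (Q TYPE('a)) lborel (\<lambda>f. f b) = distr (Q TYPE('a)) N1 (\<lambda>f. f b)"
    by (rule distr_cong) auto
  also have "\<dots> = N1"
    by (rule distr_PiM_component[OF prob_N1 assms])
  finally show ?thesis .
qed

lemma Q_comp_distributed:
  assumes "b \<in> (Basis::'a::euclidean_space set)"
  shows "distributed (Q TYPE('a)) lborel (\<lambda>f. f b) (\<lambda>x. ennreal (std_normal_density x))"
  unfolding distributed_def using Q_comp_distr[OF assms] assms by auto

lemma Q_indep: "prob_space.indep_vars (Q TYPE('a::euclidean_space)) (\<lambda>_. borel) (\<lambda>b f. f b) (Basis::'a set)"
proof -
  interpret prob_space "Q TYPE('a)" by (rule prob_Q)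
  have "indep_vars (\<lambda>_. borel) (\<lambda>b f. f b) (Basis::'a set) \<longleftrightarrow>
    distr (Q TYPE('a)) (\<Pi>\<^sub>M i\<in>Basis. borel) (\<lambda>x. \<lambda>i\<in>Basis. x i) = (\<Pi>\<^sub>M i\<in>(Basis::'a set). distr (Q TYPE('a)) borel (\<lambda>x. x i))"
    by (rule indep_vars_iff_distr_eq_PiM') auto
  moreover have "distr (Q TYPE('a)) (\<Pi>\<^sub>M i\<in>Basis. borel) (\<lambda>x. \<lambda>i\<in>Basis. x i) = Q TYPE('a)"
  proof -
    have "distr (Q TYPE('a)) (\<Pi>\<^sub>M i\<in>Basis. borel) (\<lambda>x. \<lambda>i\<in>Basis. x i) = distr (Q TYPE('a)) (Q TYPE('a)) (\<lambda>x. x)"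
    proof (rule distr_cong)
      show "sets (\<Pi>\<^sub>M i\<in>(Basis::'a set). borel) = sets (Q TYPE('a))"
        by (rule sets_PiM_cong) auto
      fix x assume "x \<in> space (Q TYPE('a))"
      then have "x \<in> PiE (Basis::'a set) (\<lambda>_. UNIV)" by (simp add: space_PiM)
      then show "restrict x Basis = x" by (rule PiE_restrict)
    qed simp
    then show ?thesis by simp
  qed
  moreover have "(\<Pi>\<^sub>M i\<in>(Basis::'a set). distr (Q TYPE('a)) borel (\<lambda>x. x i)) = Q TYPE('a)"
  proof (rule PiM_cong)
    fix i :: 'a assume i: "i \<in> Basis"
    have "distr (Q TYPE('a)) borel (\<lambda>x. x i) = distr (Q TYPE('a)) lborel (\<lambda>x. x i)"
      by (rule distr_cong) auto
    then show "distr (Q TYPE('a)) borel (\<lambda>x. x i) = N1" using Q_comp_distr[OF i] by simp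
  qed simp
  ultimately show ?thesis by simp
qed

lemma Q_inner_distributed:
  fixes u :: "'a::euclidean_space"
  assumes "u \<noteq> 0"
  shows "distributed (Q TYPE('a)) lborel (\<lambda>f. \<Sum>b\<in>{b\<in>Basis. u \<bullet> b \<noteq> 0}. (u \<bullet> b) * f b)
           (\<lambda>t. ennreal (normal_density 0 (norm u) t))"
proof -
  interpret prob_space "Q TYPE('a)" by (rule prob_Q)
  define I where "I = {b\<in>(Basis::'a set). u \<bullet> b \<noteq> 0}"
  have I: "finite I" "I \<subseteq> Basis" by (auto simp: I_def)
  have "I \<noteq> {}"
  proof
    assume "I = {}"
    then have "\<forall>b\<in>Basis. u \<bullet> b = 0" by (auto simp: I_def)
    then have "u = 0" using euclidean_all_zero_iff by blast
    then show False using assms by simp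
  qed
  have ind: "indep_vars (\<lambda>_. borel) (\<lambda>b f. (u \<bullet> b) * f b) I"
  proof -
    have "indep_vars (\<lambda>_. borel) (\<lambda>b f. f b) I"
      using Q_indep I(2) by (rule indep_vars_subset)
    then show ?thesis
      by (rule indep_vars_compose2[where Y="\<lambda>b x. (u \<bullet> b) * x" and N="\<lambda>_. borel", simplified]) auto
  qed
  have d: "distributed (Q TYPE('a)) lborel (\<lambda>f. (u \<bullet> b) * f b) (\<lambda>t. ennreal (normal_density 0 \<bar>u \<bullet> b\<bar> t))"
    if b: "b \<in> I" for b
  proof -
    have "distributed (Q TYPE('a)) lborel (\<lambda>f. 0 + (u \<bullet> b) * f b) (\<lambda>t. ennreal (normal_density (0 + (u \<bullet> b) * 0) (\<bar>u \<bullet> b\<bar> * 1) t))"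
      using b I by (intro normal_density_affine Q_comp_distributed) (auto simp: I_def)
    then show ?thesis by simp
  qed
  have "distributed (Q TYPE('a)) lborel (\<lambda>f. \<Sum>b\<in>I. (u \<bullet> b) * f b)
      (\<lambda>t. ennreal (normal_density (\<Sum>b\<in>I. 0) (sqrt (\<Sum>b\<in>I. \<bar>u \<bullet> b\<bar>\<^sup>2)) t))"
    by (rule sum_indep_normal[OF I(1) \<open>I \<noteq> {}\<close> ind _ d]) (auto simp: I_def)
  moreover have "sqrt (\<Sum>b\<in>I. \<bar>u \<bullet> b\<bar>\<^sup>2) = norm u"
  proof -
    have "(\<Sum>b\<in>I. \<bar>u \<bullet> b\<bar>\<^sup>2) = (\<Sum>b\<in>Basis. (u \<bullet> b) * (u \<bullet> b))"
      by (rule sum.mono_neutral_cong_left) (auto simp: I_def power2_eq_square)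
    also have "\<dots> = u \<bullet> u" by (rule euclidean_inner[symmetric])
    finally show ?thesis by (simp add: norm_eq_sqrt_inner)
  qed
  ultimately show ?thesis by (simp add: I_def)
qed

lemma sets_std_gauss[measurable_cong, simp]: "sets (std_gauss :: 'a::euclidean_space measure) = sets borel"
  by (simp add: std_gauss_def)

lemma space_std_gauss[simp]: "space (std_gauss :: 'a::euclidean_space measure) = UNIV"
  by (simp add: std_gauss_def)

lemma phi_measurable[measurable]: "(\<lambda>f. \<Sum>b\<in>(Basis::'a::euclidean_space set). f b *\<^sub>R b) \<in> borel_measurable (Q TYPE('a))"
  by measurable

lemma gauss_inner_distributed:
  fixes u :: "'a::euclidean_space"
  assumes "u \<noteq> 0"
  shows "distributed (std_gauss :: 'a measure) lborel (\<lambda>\<xi>. u \<bullet> \<xi>) (\<lambda>t. ennreal (normal_density 0 (norm u) t))"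
proof -
  let ?phi = "\<lambda>f. \<Sum>b\<in>(Basis::'a set). f b *\<^sub>R b"
  let ?S = "\<lambda>f. \<Sum>b\<in>{b\<in>Basis. u \<bullet> b \<noteq> 0}. (u \<bullet> b) * f b"
  have D: "distributed (Q TYPE('a)) lborel ?S (\<lambda>t. ennreal (normal_density 0 (norm u) t))"
    by (rule Q_inner_distributed[OF assms])
  have "distr (std_gauss :: 'a measure) lborel (\<lambda>\<xi>. u \<bullet> \<xi>) = distr (distr (Q TYPE('a)) borel ?phi) lborel (\<lambda>\<xi>. u \<bullet> \<xi>)"
    by (simp add: std_gauss_distr)
  also have "\<dots> = distr (Q TYPE('a)) lborel (\<lambda>f. u \<bullet> ?phi f)"
    by (subst distr_distr) (auto simp: comp_def)
  also have "\<dots> = distr (Q TYPE('a)) lborel ?S"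
  proof (rule distr_cong)
    fix f :: "'a \<Rightarrow> real"
    have "u \<bullet> ?phi f = (\<Sum>b\<in>Basis. (u \<bullet> b) * f b)"
      by (simp add: inner_sum_right mult.commute)
    also have "\<dots> = ?S f"
      by (rule sum.mono_neutral_right) auto
    finally show "u \<bullet> ?phi f = ?S f" .
  qed auto
  also have "\<dots> = density lborel (\<lambda>t. ennreal (normal_density 0 (norm u) t))"
    using D by (simp add: distributed_def)
  finally show ?thesis unfolding distributed_def by auto
qed

lemma prob_gauss: "prob_space (std_gauss :: 'a::euclidean_space measure)"
  unfolding std_gauss_distr by (rule prob_space.prob_space_distr[OF prob_Q]) measurable

lemma integrable_gauss_id: "integrable (std_gauss :: 'a::euclidean_space measure) (\<lambda>\<xi>. \<xi>)"
proof -
  have i: "integrable (std_gauss :: 'a measure) (\<lambda>\<xi>. b \<bullet> \<xi>)" if b: "b \<in> Basis" for b :: 'a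
  proof (rule distributed_integrable_var)
    show "distributed (std_gauss :: 'a measure) lborel (\<lambda>\<xi>. b \<bullet> \<xi>) (\<lambda>t. ennreal (normal_density 0 1 t))"
      using gauss_inner_distributed[of b] b by (auto simp: nonzero_Basis)
    show "integrable lborel (\<lambda>x. std_normal_density x * x)"
      using integrable_std_normal_moment[of 1] by simp
  qed simp
  have "integrable (std_gauss :: 'a measure) (\<lambda>\<xi>. \<Sum>b\<in>Basis. (b \<bullet> \<xi>) *\<^sub>R b)"
    by (intro Bochner_Integration.integrable_sum Bochner_Integration.integrable_scaleR_left i)
  moreover have "(\<lambda>\<xi>::'a. \<Sum>b\<in>Basis. (b \<bullet> \<xi>) *\<^sub>R b) = (\<lambda>\<xi>. \<xi>)"
    by (simp add: inner_commute euclidean_representation)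
  ultimately show ?thesis by simp
qed

theorem proposition2p8:
  fixes c u :: "'a::euclidean_space"
  assumes "c \<noteq> 0"
  defines "x \<equiv> u \<bullet> (c /\<^sub>R norm c)"
  defines "y \<equiv> u - x *\<^sub>R (c /\<^sub>R norm c)"
  shows "support_fun (G c) u =
     sqrt (x\<^sup>2 + (norm y)\<^sup>2) / sqrt (2 * pi)
       * exp (- (x\<^sup>2 * (norm c)\<^sup>2) / (2 * (x\<^sup>2 + (norm y)\<^sup>2)))
     + x * norm c / 2 * erf (x * norm c / (sqrt 2 * sqrt (x\<^sup>2 + (norm y)\<^sup>2)))"
proof -
  interpret P: prob_space "std_gauss :: 'a measure" by (rule prob_gauss)
  have intX: "integrable (std_gauss :: 'a measure) (\<lambda>\<xi>. c + \<xi>)"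
    using Bochner_Integration.integrable_add[OF P.integrable_const integrable_gauss_id] by simp
  have supp: "support_fun (G c) u = 1/2 * (\<integral>\<xi>. \<bar>u \<bullet> (c + \<xi>)\<bar> \<partial>std_gauss)"
    unfolding G_def by (rule vitale_support[OF intX])
  define e where "e = c /\<^sub>R norm c"
  have ne: "norm e = 1" using assms by (simp add: e_def)
  have ee: "e \<bullet> e = 1" using ne by (simp add: power2_norm_eq_inner[symmetric])
  have xc: "x * norm c = u \<bullet> c" using assms by (simp add: x_def)
  have ny: "x\<^sup>2 + (norm y)\<^sup>2 = (norm u)\<^sup>2"
  proof -
    have "(norm y)\<^sup>2 = y \<bullet> y" by (simp add: power2_norm_eq_inner)
    also have "\<dots> = u \<bullet> u - 2 * x * (u \<bullet> e) + x\<^sup>2 * (e \<bullet> e)"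
      by (simp add: y_def e_def[symmetric] inner_diff_left inner_diff_right inner_commute power2_eq_square algebra_simps)
    also have "\<dots> = (norm u)\<^sup>2 - x\<^sup>2"
      using ee by (simp add: x_def e_def[symmetric] power2_norm_eq_inner[symmetric] power2_eq_square)
    finally show ?thesis by simp
  qed
  have sq: "sqrt (x\<^sup>2 + (norm y)\<^sup>2) = norm u" by (simp add: ny)
  have x2c2: "x\<^sup>2 * (norm c)\<^sup>2 = (u \<bullet> c)\<^sup>2" using xc by (metis power_mult_distrib)
  show ?thesis
  proof (cases "u = 0")
    case True
    then show ?thesis using supp sq by (simp add: x_def)
  next
    case False
    then have nu: "norm u > 0" by simp
    have "(\<integral>\<xi>. \<bar>u \<bullet> (c + \<xi>)\<bar> \<partial>std_gauss) = (\<integral>\<xi>. \<bar>u \<bullet> c + u \<bullet> \<xi>\<bar> \<partial>std_gauss)"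
      by (simp add: inner_add_right)
    also have "\<dots> = (\<integral>t. normal_density 0 (norm u) t * \<bar>u \<bullet> c + t\<bar> \<partial>lborel)"
      by (rule distributed_integral[OF gauss_inner_distributed[OF False], symmetric]) auto
    also have "\<dots> = 2 * norm u / sqrt (2 * pi) * exp (- (u \<bullet> c)\<^sup>2 / (2 * (norm u)\<^sup>2))
        + (u \<bullet> c) * erf ((u \<bullet> c) / (sqrt 2 * norm u))"
      by (rule abs_gauss_integral(1)[OF nu])
    finally have calc: "(\<integral>\<xi>. \<bar>u \<bullet> (c + \<xi>)\<bar> \<partial>std_gauss) = 2 * norm u / sqrt (2 * pi) * exp (- (u \<bullet> c)\<^sup>2 / (2 * (norm u)\<^sup>2))
        + (u \<bullet> c) * erf ((u \<bullet> c) / (sqrt 2 * norm u))" .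
    have "support_fun (G c) u = norm u / sqrt (2 * pi) * exp (- (u \<bullet> c)\<^sup>2 / (2 * (norm u)\<^sup>2))
        + (u \<bullet> c) / 2 * erf ((u \<bullet> c) / (sqrt 2 * norm u))"
      unfolding supp calc by (simp add: distrib_left)
    then show ?thesis
      by (simp only: sq ny x2c2 xc real_sqrt_abs abs_norm_cancel power2_eq_square[symmetric])
  qed
qed

end
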